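(* Let $W,M$ be disjoint with $|W|=|M|=n$, and let $\succ_W\in\mathcal F(W,M)$ and $\succ_M\in\mathcal F(M,W)$. Every algorithm for finding a stable marriage, or for verifying the stability of a marriage (when given as input a marriage that is stable with respect to $\succ_W,\succ_M$), that performs only pairwise-comparison queries onto $W$ (and arbitrary queries onto $M$), performs, on input $\succ_W,\succ_M$, at least as many queries onto $W$ as the men-proposing deferred-acceptance algorithm performs on input $\succ_W,\succ_M$.
   Context: $\mathcal F(W,M)$ is the set of profiles assigning each woman a total order on $M$; $\mathcal F(M,W)$ analogously for men. A perfect marriage is a bijection between $W$ and $M$; a pair $(w,m)$ is blocking for $\mu$ if $w$ prefers $m$ to her spouse in $\mu$ and $m$ prefers $w$ to his spouse in $\mu$; $\mu$ is stable if it has no blocking pair. A pairwise-comparison query onto $W$ asks whether $m\succ_w m'$ for given $w\in W$, $m,m'\in M$. The men-proposing deferred-acceptance algorithm: initially everyone is provisionally single. While some man is provisionally single, pick an arbitrary provisionally single man $m$; he proposes to the highest-ranked woman $w$ on his list who has not yet rejected him. If $w$ is provisionally single, $m$ and $w$ become provisionally married. Otherwise $w$ is provisionally married to some $m'$, and one pairwise-comparison query onto $w$ is made: if $m\succ_w m'$, $w$ rejects $m'$ (who becomes provisionally single) and becomes provisionally married to $m$; else $w$ rejects $m$. When no man is provisionally single, the provisional couples form the output. (All runs on a given input make the same number of queries onto $W$.) *)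

theory Defs
  imports Main "HOL-Library.Cardinality"
begin

text \<open>A preference profile of agents of type 'a over agents of type 'b assigns to
  each agent a a strict total order P a on 'b; (x, y) \<in> P a means x \<succ>_a y.\<close>
definition pref_profiles :: "('a \<Rightarrow> ('b \<times> 'b) set) set" where
  "pref_profiles = {P. \<forall>a. strict_linear_order (P a)}"

definition blocking :: "('w \<Rightarrow> ('m \<times> 'm) set) \<Rightarrow> ('m \<Rightarrow> ('w \<times> 'w) set) \<Rightarrow> ('w \<Rightarrow> 'm) \<Rightarrow> 'w \<Rightarrow> 'm \<Rightarrow> bool" where
  "blocking PW PM mu w m \<longleftrightarrow> (m, mu w) \<in> PW w \<and> (w, inv mu m) \<in> PM m"

definition stable :: "('w \<Rightarrow> ('m \<times> 'm) set) \<Rightarrow> ('m \<Rightarrow> ('w \<times> 'w) set) \<Rightarrow> ('w \<Rightarrow> 'm) \<Rightarrow> bool" where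
  "stable PW PM mu \<longleftrightarrow> bij mu \<and> (\<forall>w m. \<not> blocking PW PM mu w m)"

datatype ('w, 'm, 'r) dtree = Leaf 'r | Query 'w 'm 'm "('w, 'm, 'r) dtree" "('w, 'm, 'r) dtree"

fun run_tree :: "('w \<Rightarrow> ('m \<times> 'm) set) \<Rightarrow> ('w, 'm, 'r) dtree \<Rightarrow> 'r" where
  "run_tree PW (Leaf r) = r"
| "run_tree PW (Query w m m' t f) = (if (m, m') \<in> PW w then run_tree PW t else run_tree PW f)"

fun num_queries :: "('w \<Rightarrow> ('m \<times> 'm) set) \<Rightarrow> ('w, 'm, 'r) dtree \<Rightarrow> nat" where
  "num_queries PW (Leaf r) = 0"
| "num_queries PW (Query w m m' t f) =
     Suc (if (m, m') \<in> PW w then num_queries PW t else num_queries PW f)"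

text \<open>An algorithm may make arbitrary (uncounted) queries onto M, so it is modelled as a
  family of decision trees indexed by the men's profile (and by the input marriage for verifiers).\<close>
definition finds_stable :: "(('m \<Rightarrow> ('w \<times> 'w) set) \<Rightarrow> ('w, 'm, 'w \<Rightarrow> 'm) dtree) \<Rightarrow> bool" where
  "finds_stable alg \<longleftrightarrow>
     (\<forall>PW \<in> pref_profiles. \<forall>PM \<in> pref_profiles. stable PW PM (run_tree PW (alg PM)))"

definition verifies_stability :: "(('m \<Rightarrow> ('w \<times> 'w) set) \<Rightarrow> ('w \<Rightarrow> 'm) \<Rightarrow> ('w, 'm, bool) dtree) \<Rightarrow> bool" where
  "verifies_stability ver \<longleftrightarrow>
     (\<forall>PW \<in> pref_profiles. \<forall>PM \<in> pref_profiles. \<forall>mu. bij mu \<longrightarrow>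
        run_tree PW (ver PM mu) = stable PW PM mu)"

text \<open>Men-proposing deferred acceptance. State: (provisional wife of each man,
  set of pairs (m, w) such that w has rejected m, number of queries onto W so far).\<close>
type_synonym ('w, 'm) da_state = "('m \<Rightarrow> 'w option) \<times> ('m \<times> 'w) set \<times> nat"

definition da_top :: "('m \<Rightarrow> ('w \<times> 'w) set) \<Rightarrow> ('m \<times> 'w) set \<Rightarrow> 'm \<Rightarrow> 'w \<Rightarrow> bool" where
  "da_top PM rej m w \<longleftrightarrow> (m, w) \<notin> rej \<and> (\<forall>w'. (m, w') \<notin> rej \<longrightarrow> w' \<noteq> w \<longrightarrow> (w, w') \<in> PM m)"

inductive da_step :: "('w \<Rightarrow> ('m \<times> 'm) set) \<Rightarrow> ('m \<Rightarrow> ('w \<times> 'w) set)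
    \<Rightarrow> ('w, 'm) da_state \<Rightarrow> ('w, 'm) da_state \<Rightarrow> bool" for PW PM where
  propose_single:
    "\<lbrakk> eng m = None; da_top PM rej m w; \<forall>m'. eng m' \<noteq> Some w \<rbrakk>
     \<Longrightarrow> da_step PW PM (eng, rej, q) (eng(m := Some w), rej, q)"
| propose_accept:
    "\<lbrakk> eng m = None; da_top PM rej m w; eng m' = Some w; (m, m') \<in> PW w \<rbrakk>
     \<Longrightarrow> da_step PW PM (eng, rej, q) (eng(m := Some w, m' := None), insert (m', w) rej, Suc q)"
| propose_reject:
    "\<lbrakk> eng m = None; da_top PM rej m w; eng m' = Some w; (m, m') \<notin> PW w \<rbrakk>
     \<Longrightarrow> da_step PW PM (eng, rej, q) (eng, insert (m, w) rej, Suc q)"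

definition da_final :: "('w, 'm) da_state \<Rightarrow> bool" where
  "da_final s \<longleftrightarrow> (\<forall>m. fst s m \<noteq> None)"

definition da_queries :: "('w \<Rightarrow> ('m \<times> 'm) set) \<Rightarrow> ('m \<Rightarrow> ('w \<times> 'w) set) \<Rightarrow> nat \<Rightarrow> bool" where
  "da_queries PW PM k \<longleftrightarrow>
     (\<exists>s. (da_step PW PM)\<^sup>*\<^sup>* (\<lambda>_. None, {}, 0) s \<and> da_final s \<and> snd (snd s) = k)"

end

theory Submission
  imports Defs
begin

lemma prof_irr: "P \<in> pref_profiles \<Longrightarrow> (x, x) \<notin> P a"
  unfolding pref_profiles_def strict_linear_order_on_def irrefl_def by blast

lemma prof_trans: "P \<in> pref_profiles \<Longrightarrow> (x, y) \<in> P a \<Longrightarrow> (y, z) \<in> P a \<Longrightarrow> (x, z) \<in> P a"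
  unfolding pref_profiles_def strict_linear_order_on_def by (blast dest: transD)

lemma prof_asym: "P \<in> pref_profiles \<Longrightarrow> (x, y) \<in> P a \<Longrightarrow> (y, x) \<notin> P a"
  using prof_irr prof_trans by metis

lemma prof_total: "P \<in> pref_profiles \<Longrightarrow> x \<noteq> y \<Longrightarrow> (x, y) \<notin> P a \<Longrightarrow> (y, x) \<in> P a"
  unfolding pref_profiles_def strict_linear_order_on_def total_on_def by blast

fun pf :: "('w \<Rightarrow> ('m \<times> 'm) set) \<Rightarrow> ('w, 'm, 'r) dtree \<Rightarrow> ('w \<times> 'm \<times> 'm) set" where
  "pf PW (Leaf r) = {}"
| "pf PW (Query w m m' t f) = (if (m, m') \<in> PW w then insert (w, m, m') (pf PW t)
     else (if (m', m) \<in> PW w then {(w, m', m)} else {}) \<union> pf PW f)"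

lemma pf_finite: "finite (pf PW T)"
  by (induction T) auto

lemma pf_card: "card (pf PW T) \<le> num_queries PW T"
proof (induction T)
  case (Leaf x)
  then show ?case by simp
next
  case (Query w m m' t f)
  show ?case
  proof (cases "(m, m') \<in> PW w")
    case True
    then show ?thesis using Query pf_finite[of PW t]
      by (simp add: card_insert_if)
  next
    case False
    have "card ((if (m', m) \<in> PW w then {(w, m', m)} else {}) \<union> pf PW f) \<le> 1 + card (pf PW f)"
      using card_Un_le[of "(if (m', m) \<in> PW w then {(w, m', m)} else {})" "pf PW f"]
      by (auto split: if_splits)
    then show ?thesis using Query False by simp
  qed
qed

lemma pf_agree:
  assumes "PW \<in> pref_profiles" "PW' \<in> pref_profiles"
    and "\<forall>(w0, x, y) \<in> pf PW T. (x, y) \<in> PW' w0"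
  shows "run_tree PW' T = run_tree PW T \<and> num_queries PW' T = num_queries PW T"
  using assms(3)
proof (induction T)
  case (Leaf x)
  then show ?case by simp
next
  case (Query w m m' t f)
  show ?case
  proof (cases "(m, m') \<in> PW w")
    case True
    then show ?thesis using Query by auto
  next
    case False
    have "(m, m') \<notin> PW' w"
    proof (cases "m = m'")
      case True then show ?thesis using prof_irr assms(2) by metis
    next
      case ne: False
      then have "(m', m) \<in> PW w" using prof_total assms(1) False by metis
      then have "(m', m) \<in> PW' w" using Query.prems False by auto
      then show ?thesis using prof_asym assms(2) by metis
    qed
    then show ?thesis using Query False by auto
  qed
qed

definition top_rel :: "('m \<times> 'm) set \<Rightarrow> 'm \<Rightarrow> ('m \<times> 'm) set" where
  "top_rel R m = {(x, y). x \<noteq> y \<and> (x = m \<or> (y \<noteq> m \<and> (x, y) \<in> R))}"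

lemma top_rel_prof:
  assumes "PW \<in> pref_profiles"
  shows "PW(w := top_rel (PW w) m) \<in> pref_profiles"
proof -
  have "strict_linear_order (top_rel (PW w) m)"
    unfolding strict_linear_order_on_def
  proof (intro conjI)
    show "trans (top_rel (PW w) m)"
      unfolding top_rel_def trans_def using prof_trans[OF assms] prof_asym[OF assms] by blast
    show "irrefl (top_rel (PW w) m)" unfolding top_rel_def irrefl_def by blast
    show "total (top_rel (PW w) m)" unfolding top_rel_def total_on_def
      using prof_total[OF assms] by blast
  qed
  then show ?thesis using assms unfolding pref_profiles_def by auto
qed

definition inv_da :: "('w \<Rightarrow> ('m \<times> 'm) set) \<Rightarrow> ('m \<Rightarrow> ('w \<times> 'w) set) \<Rightarrow> ('w, 'm) da_state \<Rightarrow> bool" where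
  "inv_da PW PM s \<longleftrightarrow> (case s of (eng, rej, q) \<Rightarrow>
     (\<forall>m w. eng m = Some w \<longrightarrow> da_top PM rej m w)
   \<and> (\<forall>m w w'. (m, w) \<in> rej \<longrightarrow> (m, w') \<notin> rej \<longrightarrow> (w, w') \<in> PM m)
   \<and> q = card rej \<and> finite rej)"

lemma da_top_same: "(\<forall>w'. ((m, w') \<in> rej') = ((m, w') \<in> rej)) \<Longrightarrow> da_top PM rej' m w = da_top PM rej m w"
  unfolding da_top_def by auto

lemma inv_step:
  assumes "da_step PW PM s s'" "inv_da PW PM s" "PM \<in> pref_profiles"
  shows "inv_da PW PM s'"
  using assms(1,2)
proof (induction rule: da_step.induct)
  case (propose_single eng m rej w q)
  then show ?case unfolding inv_da_def by auto
next
  case (propose_accept eng m rej w m' q)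
  have nin: "(m', w) \<notin> rej" using propose_accept unfolding inv_da_def da_top_def by auto
  have top': "da_top PM rej m' w" using propose_accept unfolding inv_da_def by auto
  have A: "\<forall>x y. (eng(m := Some w, m' := None)) x = Some y \<longrightarrow> da_top PM (insert (m', w) rej) x y"
  proof (intro allI impI)
    fix x y assume "(eng(m := Some w, m' := None)) x = Some y"
    then have "x \<noteq> m'" and "(x = m \<and> y = w) \<or> (x \<noteq> m \<and> eng x = Some y)"
      by (auto split: if_splits)
    moreover have "da_top PM rej x y" using propose_accept calculation unfolding inv_da_def by auto
    ultimately show "da_top PM (insert (m', w) rej) x y"
      using da_top_same[of x "insert (m', w) rej" rej] by auto
  qed
  have B: "\<forall>x y y'. (x, y) \<in> insert (m', w) rej \<longrightarrow> (x, y') \<notin> insert (m', w) rej \<longrightarrow> (y, y') \<in> PM x"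
  proof (intro allI impI)
    fix x y y' assume a: "(x, y) \<in> insert (m', w) rej" "(x, y') \<notin> insert (m', w) rej"
    show "(y, y') \<in> PM x"
    proof (cases "x = m' \<and> y = w")
      case True then show ?thesis using top' a unfolding da_top_def by auto
    next
      case False then show ?thesis using a propose_accept unfolding inv_da_def by auto
    qed
  qed
  have C: "Suc q = card (insert (m', w) rej)"
    using propose_accept nin unfolding inv_da_def by simp
  have D: "finite (insert (m', w) rej)" using propose_accept unfolding inv_da_def by simp
  show ?case unfolding inv_da_def apply (simp only: case_prod_conv) using A B C D by blast
next
  case (propose_reject eng m rej w m' q)
  have nin: "(m, w) \<notin> rej" using propose_reject unfolding da_top_def by auto
  have A: "\<forall>x y. eng x = Some y \<longrightarrow> da_top PM (insert (m, w) rej) x y"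
  proof (intro allI impI)
    fix x y assume "eng x = Some y"
    moreover then have "x \<noteq> m" using propose_reject by auto
    moreover have "da_top PM rej x y" using propose_reject calculation unfolding inv_da_def by auto
    ultimately show "da_top PM (insert (m, w) rej) x y"
      using da_top_same[of x "insert (m, w) rej" rej] by auto
  qed
  have B: "\<forall>x y y'. (x, y) \<in> insert (m, w) rej \<longrightarrow> (x, y') \<notin> insert (m, w) rej \<longrightarrow> (y, y') \<in> PM x"
  proof (intro allI impI)
    fix x y y' assume a: "(x, y) \<in> insert (m, w) rej" "(x, y') \<notin> insert (m, w) rej"
    show "(y, y') \<in> PM x"
    proof (cases "x = m \<and> y = w")
      case True then show ?thesis using propose_reject a unfolding da_top_def by auto
    next
      case False then show ?thesis using a propose_reject unfolding inv_da_def by auto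
    qed
  qed
  have C: "Suc q = card (insert (m, w) rej)"
    using propose_reject nin unfolding inv_da_def by simp
  have D: "finite (insert (m, w) rej)" using propose_reject unfolding inv_da_def by simp
  show ?case unfolding inv_da_def apply (simp only: case_prod_conv) using A B C D by blast
qed

lemma inv_reach:
  assumes "(da_step PW PM)\<^sup>*\<^sup>* (\<lambda>_. None, {}, 0) s" "PM \<in> pref_profiles"
  shows "inv_da PW PM s"
  using assms(1)
proof (induction rule: rtranclp_induct)
  case base
  then show ?case unfolding inv_da_def by simp
next
  case (step y z)
  then show ?case using inv_step assms(2) by blast
qed

definition nrs :: "('w \<Rightarrow> 'm) \<Rightarrow> ('w, 'm) da_state \<Rightarrow> bool" where
  "nrs mu s \<longleftrightarrow> (\<forall>m. (m, inv mu m) \<notin> fst (snd s))"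

lemma nrs_step:
  assumes "da_step PW PM s s'" "inv_da PW PM s" "nrs mu s" "stable PW PM mu"
    "PW \<in> pref_profiles" "PM \<in> pref_profiles"
  shows "nrs mu s'"
  using assms(1,2,3)
proof (induction rule: da_step.induct)
  case (propose_single eng m rej w q)
  then show ?case unfolding nrs_def by auto
next
  case (propose_accept eng m rej w m' q)
  have bij: "bij mu" using assms(4) unfolding stable_def by auto
  show ?case unfolding nrs_def
  proof (intro allI, simp only: fst_conv snd_conv)
    fix x
    have X: "inv mu x = w \<Longrightarrow> x = m' \<Longrightarrow> False"
    proof -
      assume x: "inv mu x = w" "x = m'"
      then have muw: "mu w = m'" using bij by (metis bij_inv_eq_iff)
      have mm: "m \<noteq> m'" using propose_accept by auto
      have "inv mu m \<noteq> w" using mm muw bij by (metis bij_inv_eq_iff)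
      moreover have "(m, inv mu m) \<notin> rej" using propose_accept unfolding nrs_def by auto
      ultimately have "(w, inv mu m) \<in> PM m" using propose_accept(2) unfolding da_top_def by auto
      moreover have "(m, mu w) \<in> PW w" using muw propose_accept by simp
      ultimately have "blocking PW PM mu w m" unfolding blocking_def by simp
      then show False using assms(4) unfolding stable_def by blast
    qed
    have "(x, inv mu x) \<notin> rej" using propose_accept unfolding nrs_def by auto
    then show "(x, inv mu x) \<notin> insert (m', w) rej" using X by auto
  qed
next
  case (propose_reject eng m rej w m' q)
  have bij: "bij mu" using assms(4) unfolding stable_def by auto
  show ?case unfolding nrs_def
  proof (intro allI, simp only: fst_conv snd_conv)
    fix x
    have X: "inv mu x = w \<Longrightarrow> x = m \<Longrightarrow> False"
    proof -
      assume x: "inv mu x = w" "x = m"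
      then have muw: "mu w = m" using bij by (metis bij_inv_eq_iff)
      have mm: "m \<noteq> m'" using propose_reject by auto
      have pw: "(m', m) \<in> PW w" using prof_total[OF assms(5) mm] propose_reject by metis
      have top: "da_top PM rej m' w" using propose_reject unfolding inv_da_def by auto
      have "inv mu m' \<noteq> w" using mm muw bij by (metis bij_inv_eq_iff)
      moreover have "(m', inv mu m') \<notin> rej" using propose_reject unfolding nrs_def by auto
      ultimately have "(w, inv mu m') \<in> PM m'" using top unfolding da_top_def by auto
      moreover have "(m', mu w) \<in> PW w" using muw pw by simp
      ultimately have "blocking PW PM mu w m'" unfolding blocking_def by simp
      then show False using assms(4) unfolding stable_def by blast
    qed
    have "(x, inv mu x) \<notin> rej" using propose_reject unfolding nrs_def by auto
    then show "(x, inv mu x) \<notin> insert (m, w) rej" using X by auto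
  qed
qed

lemma nrs_reach:
  assumes "(da_step PW PM)\<^sup>*\<^sup>* (\<lambda>_. None, {}, 0) s" "stable PW PM mu"
    "PW \<in> pref_profiles" "PM \<in> pref_profiles"
  shows "nrs mu s"
  using assms(1)
proof (induction rule: rtranclp_induct)
  case base
  then show ?case unfolding nrs_def by simp
next
  case (step y z)
  then show ?case using nrs_step inv_reach assms by blast
qed

lemma key:
  assumes "(da_step PW PM)\<^sup>*\<^sup>* (\<lambda>_. None, {}, 0) s"
    and pw: "PW \<in> pref_profiles" and pm: "PM \<in> pref_profiles"
    and st: "stable PW PM mu"
    and good: "\<And>PW'. PW' \<in> pref_profiles \<Longrightarrow> run_tree PW' T = run_tree PW T \<Longrightarrow> stable PW' PM mu"
    and mw: "(m, w) \<in> fst (snd s)"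
  shows "\<exists>x. (w, x, m) \<in> pf PW T"
proof (rule ccontr)
  assume no: "\<not> ?thesis"
  obtain eng rej q where s: "s = (eng, rej, q)" by (cases s) auto
  have iv: "inv_da PW PM s" using inv_reach assms by blast
  have nr: "nrs mu s" using nrs_reach assms by blast
  have bij: "bij mu" using st unfolding stable_def by auto
  have r1: "(m, inv mu m) \<notin> rej" using nr s unfolding nrs_def by auto
  have pm1: "(w, inv mu m) \<in> PM m" using iv s mw r1 unfolding inv_da_def by auto
  have ne: "mu w \<noteq> m" using r1 mw s bij by (metis bij_inv_eq_iff fst_conv snd_conv)
  define PW' where "PW' = PW(w := top_rel (PW w) m)"
  have pw': "PW' \<in> pref_profiles" unfolding PW'_def using top_rel_prof[OF pw] .
  have ag: "\<forall>(w0, x, y) \<in> pf PW T. (x, y) \<in> PW' w0"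
  proof (intro ballI, clarify)
    fix w0 x y assume a: "(w0, x, y) \<in> pf PW T"
    have "\<forall>(w0, x, y) \<in> pf PW T. (x, y) \<in> PW w0"
      by (induction T) auto
    then have xy: "(x, y) \<in> PW w0" using a by auto
    show "(x, y) \<in> PW' w0"
    proof (cases "w0 = w")
      case True
      then have "y \<noteq> m" using no a by auto
      moreover have "x \<noteq> y" using xy prof_irr[OF pw] by metis
      ultimately show ?thesis using True xy unfolding PW'_def top_rel_def by auto
    qed (simp add: PW'_def xy)
  qed
  have "run_tree PW' T = run_tree PW T" using pf_agree[OF pw pw' ag] by simp
  then have "stable PW' PM mu" using good pw' by blast
  moreover have "blocking PW' PM mu w m"
    unfolding blocking_def PW'_def top_rel_def using ne pm1 by auto
  ultimately show False unfolding stable_def by blast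
qed

lemma bound:
  assumes "(da_step PW PM)\<^sup>*\<^sup>* (\<lambda>_. None, {}, 0) s"
    and pw: "PW \<in> pref_profiles" and pm: "PM \<in> pref_profiles"
    and st: "stable PW PM mu"
    and good: "\<And>PW'. PW' \<in> pref_profiles \<Longrightarrow> run_tree PW' T = run_tree PW T \<Longrightarrow> stable PW' PM mu"
  shows "snd (snd s) \<le> num_queries PW T"
proof -
  obtain eng rej q where s: "s = (eng, rej, q)" by (cases s) auto
  have iv: "inv_da PW PM s" using inv_reach assms by blast
  then have q: "q = card rej" using s unfolding inv_da_def by auto
  have "rej \<subseteq> (\<lambda>(w, x, y). (y, w)) ` pf PW T"
  proof
    fix p assume "p \<in> rej"
    then obtain m w where p: "p = (m, w)" "(m, w) \<in> rej" by (cases p) auto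
    have "(m, w) \<in> fst (snd s)" using p s by simp
    then obtain x where x: "(w, x, m) \<in> pf PW T" using key[where T=T, OF assms(1) pw pm st good] by blast
    show "p \<in> (\<lambda>(w, x, y). (y, w)) ` pf PW T"
      using p(1) by (intro image_eqI[OF _ x]) simp
  qed
  then have "card rej \<le> card ((\<lambda>(w, x, y). (y, w)) ` pf PW T)"
    by (intro card_mono finite_imageI pf_finite)
  also have "\<dots> \<le> card (pf PW T)" by (intro card_image_le pf_finite)
  also have "\<dots> \<le> num_queries PW T" by (rule pf_card)
  finally show ?thesis using q s by simp
qed

theorem theorem30:
  fixes PW :: "'w::finite \<Rightarrow> ('m::finite \<times> 'm) set"
    and PM :: "'m \<Rightarrow> ('w \<times> 'w) set"
  assumes "CARD('w) = CARD('m)"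
    and "PW \<in> pref_profiles" and "PM \<in> pref_profiles"
  shows "(\<forall>alg. finds_stable alg \<longrightarrow>
            (\<forall>k. da_queries PW PM k \<longrightarrow> k \<le> num_queries PW (alg PM)))
       \<and> (\<forall>ver mu. verifies_stability ver \<longrightarrow> stable PW PM mu \<longrightarrow>
            (\<forall>k. da_queries PW PM k \<longrightarrow> k \<le> num_queries PW (ver PM mu)))"
proof (intro conjI allI impI)
  fix alg :: "('m \<Rightarrow> ('w \<times> 'w) set) \<Rightarrow> ('w, 'm, 'w \<Rightarrow> 'm) dtree" and k assume fs: "finds_stable alg" and dq: "da_queries PW PM k"
  obtain s where s: "(da_step PW PM)\<^sup>*\<^sup>* (\<lambda>_. None, {}, 0) s" "snd (snd s) = k"
    using dq unfolding da_queries_def by auto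
  have st: "stable PW PM (run_tree PW (alg PM))" using fs assms unfolding finds_stable_def by auto
  have "\<And>PW'. PW' \<in> pref_profiles \<Longrightarrow> run_tree PW' (alg PM) = run_tree PW (alg PM) \<Longrightarrow>
      stable PW' PM (run_tree PW (alg PM))"
  proof -
    fix PW' assume a: "PW' \<in> pref_profiles" and b: "run_tree PW' (alg PM) = run_tree PW (alg PM)"
    have "stable PW' PM (run_tree PW' (alg PM))" using fs a assms(3) unfolding finds_stable_def by blast
    then show "stable PW' PM (run_tree PW (alg PM))" using b by simp
  qed
  then show "k \<le> num_queries PW (alg PM)" using bound[OF s(1) assms(2,3) st] s(2) by blast
next
  fix ver :: "('m \<Rightarrow> ('w \<times> 'w) set) \<Rightarrow> ('w \<Rightarrow> 'm) \<Rightarrow> ('w, 'm, bool) dtree" and mu k assume vs: "verifies_stability ver" and st: "stable PW PM mu"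
    and dq: "da_queries PW PM k"
  obtain s where s: "(da_step PW PM)\<^sup>*\<^sup>* (\<lambda>_. None, {}, 0) s" "snd (snd s) = k"
    using dq unfolding da_queries_def by auto
  have bij: "bij mu" using st unfolding stable_def by auto
  have r: "run_tree PW (ver PM mu)" using vs assms st bij unfolding verifies_stability_def by auto
  have "\<And>PW'. PW' \<in> pref_profiles \<Longrightarrow> run_tree PW' (ver PM mu) = run_tree PW (ver PM mu) \<Longrightarrow>
      stable PW' PM mu"
  proof -
    fix PW' assume a: "PW' \<in> pref_profiles" and b: "run_tree PW' (ver PM mu) = run_tree PW (ver PM mu)"
    have "run_tree PW' (ver PM mu) = stable PW' PM mu" using vs a assms(3) bij unfolding verifies_stability_def by blast
    then show "stable PW' PM mu" using b r by simp
  qed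
  then show "k \<le> num_queries PW (ver PM mu)" using bound[OF s(1) assms(2,3) st] s(2) by blast
qed

end
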